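(* Let $F$ be a positive integer and $S$ a numerical semigroup. The following are equivalent: (1) $S\in\mathrm{Sat}(F)$ and $\mathrm{Sat}(F)\text{-}\mathrm{rank}(S)=1$; (2) there is $m\in\mathbb{N}$ with $2\le m<F$, $m\nmid F$, and $S=\mathrm{T}(m,F+1)$.
   Context: A numerical semigroup is a subset $S\subseteq\mathbb{N}$ closed under addition, containing $0$, with $\mathbb{N}\setminus S$ finite; its Frobenius number $\mathrm{F}(S)$ is the largest integer not in $S$. For $A\subseteq\mathbb{N}$ and $a\in A$, let $\mathrm{d}_A(a)=\gcd\{x\in A\mid x\le a\}$. A numerical semigroup $S$ is saturated if $s+\mathrm{d}_S(s)\in S$ for all $s\in S\setminus\{0\}$. For a positive integer $F$, $\mathrm{Sat}(F)$ denotes the set of all saturated numerical semigroups $S$ with $\mathrm{F}(S)=F$. For $a,b\in\mathbb{N}$, $\mathrm{T}(a,b)=\{ka\mid k\in\mathbb{N}\}\cup\{x\in\mathbb{N}\mid x\ge b\}$. Let $\Delta(F+1)=\{0\}\cup\{x\in\mathbb{N}\mid x\ge F+1\}$. A set $X\subseteq\mathbb{N}$ is a $\mathrm{Sat}(F)$-set if $X\cap\Delta(F+1)=\emptyset$ and there exists $S\in\mathrm{Sat}(F)$ with $X\subseteq S$. For a $\mathrm{Sat}(F)$-set $X$, $\mathrm{Sat}(F)[X]$ denotes the intersection of all elements of $\mathrm{Sat}(F)$ containing $X$ (the smallest element of $\mathrm{Sat}(F)$ containing $X$). If $S=\mathrm{Sat}(F)[X]$, $X$ is a $\mathrm{Sat}(F)$-system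 of generators of $S$; it is minimal if $S\neq\mathrm{Sat}(F)[Y]$ for every proper subset $Y\subsetneq X$. Every $S\in\mathrm{Sat}(F)$ has a unique minimal $\mathrm{Sat}(F)$-system of generators, and its cardinality is the $\mathrm{Sat}(F)$-rank of $S$, denoted $\mathrm{Sat}(F)\text{-}\mathrm{rank}(S)$. *)

theory Defs
  imports Main
begin

definition numerical_semigroup :: "nat set \<Rightarrow> bool" where
  "numerical_semigroup S \<longleftrightarrow> 0 \<in> S \<and> (\<forall>x\<in>S. \<forall>y\<in>S. x + y \<in> S) \<and> finite (UNIV - S)"

definition frobenius :: "nat set \<Rightarrow> int" where
  "frobenius S = (if S = UNIV then -1 else int (Max (UNIV - S)))"

definition dA :: "nat set \<Rightarrow> nat \<Rightarrow> nat" where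
  "dA A a = Gcd {x \<in> A. x \<le> a}"

definition saturated :: "nat set \<Rightarrow> bool" where
  "saturated S \<longleftrightarrow> numerical_semigroup S \<and> (\<forall>s \<in> S - {0}. s + dA S s \<in> S)"

definition Sat :: "nat \<Rightarrow> nat set set" where
  "Sat F = {S. saturated S \<and> frobenius S = int F}"

definition T :: "nat \<Rightarrow> nat \<Rightarrow> nat set" where
  "T a b = {k * a | k. True} \<union> {x. x \<ge> b}"

definition Delta :: "nat \<Rightarrow> nat set" where
  "Delta n = {0} \<union> {x. x \<ge> n}"

definition Sat_set :: "nat \<Rightarrow> nat set \<Rightarrow> bool" where
  "Sat_set F X \<longleftrightarrow> X \<inter> Delta (F + 1) = {} \<and> (\<exists>S \<in> Sat F. X \<subseteq> S)"

definition Sat_closure :: "nat \<Rightarrow> nat set \<Rightarrow> nat set" where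
  "Sat_closure F X = \<Inter> {S \<in> Sat F. X \<subseteq> S}"

definition Sat_system :: "nat \<Rightarrow> nat set \<Rightarrow> nat set \<Rightarrow> bool" where
  "Sat_system F X S \<longleftrightarrow> Sat_set F X \<and> S = Sat_closure F X"

definition minimal_Sat_system :: "nat \<Rightarrow> nat set \<Rightarrow> nat set \<Rightarrow> bool" where
  "minimal_Sat_system F X S \<longleftrightarrow> Sat_system F X S \<and> (\<forall>Y. Y \<subset> X \<longrightarrow> S \<noteq> Sat_closure F Y)"

text \<open>Sat(F)-rank: cardinality of the (unique) minimal Sat(F)-system of generators.\<close>
definition Sat_rank :: "nat \<Rightarrow> nat set \<Rightarrow> nat" where
  "Sat_rank F S = card (THE X. minimal_Sat_system F X S)"

end

theory Submission imports Defs begin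

lemma Sat_D:
  assumes "S \<in> Sat F"
  shows "0 \<in> S" "\<And>x y. x\<in>S \<Longrightarrow> y\<in>S \<Longrightarrow> x+y\<in>S" "F \<notin> S"
    "\<And>x. x > F \<Longrightarrow> x \<in> S" "\<And>s. s\<in>S \<Longrightarrow> s\<noteq>0 \<Longrightarrow> s + dA S s \<in> S"
proof -
  have sat: "saturated S" and fr: "frobenius S = int F" using assms by (auto simp: Sat_def)
  hence ns: "numerical_semigroup S" by (simp add: saturated_def)
  show "0 \<in> S" "\<And>x y. x\<in>S \<Longrightarrow> y\<in>S \<Longrightarrow> x+y\<in>S" using ns by (auto simp: numerical_semigroup_def)
  show "\<And>s. s\<in>S \<Longrightarrow> s\<noteq>0 \<Longrightarrow> s + dA S s \<in> S" using sat by (auto simp: saturated_def)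
  have ne: "S \<noteq> UNIV" using fr by (auto simp: frobenius_def)
  hence M: "Max (UNIV - S) = F" using fr by (auto simp: frobenius_def)
  have fin: "finite (UNIV - S)" using ns by (simp add: numerical_semigroup_def)
  have "UNIV - S \<noteq> {}" using ne by auto
  from Max_in[OF fin this] M show "F \<notin> S" by auto
  show "\<And>x. x > F \<Longrightarrow> x \<in> S"
  proof (rule ccontr)
    fix x assume "x > F" "x \<notin> S"
    hence "x \<le> Max (UNIV - S)" using fin by (intro Max_ge) auto
    thus False using M \<open>x > F\<close> by simp
  qed
qed

lemma Sat_I:
  assumes "0\<in>S" "\<And>x y. x\<in>S \<Longrightarrow> y\<in>S \<Longrightarrow> x+y\<in>S" "F\<notin>S" "\<And>x. x>F \<Longrightarrow> x\<in>S"
    "\<And>s. s\<in>S \<Longrightarrow> s\<noteq>0 \<Longrightarrow> s + dA S s \<in> S"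
  shows "S \<in> Sat F"
proof -
  have sub: "UNIV - S \<subseteq> {..F}" using assms(4) by (auto simp: not_less[symmetric])
  hence fin: "finite (UNIV - S)" using finite_subset by blast
  have ne: "S \<noteq> UNIV" using assms(3) by auto
  have "Max (UNIV - S) = F" using fin sub assms(3) by (intro Max_eqI) auto
  thus ?thesis using assms fin ne
    by (auto simp: Sat_def saturated_def numerical_semigroup_def frobenius_def)
qed

lemma dA_dvd_mono:
  assumes "{x\<in>A. x \<le> a} \<subseteq> {x\<in>B. x \<le> b}"
  shows "dA B b dvd dA A a"
  unfolding dA_def using assms by (intro Gcd_greatest) (auto intro: Gcd_dvd)

lemma sat_shift:
  assumes sat: "\<And>s. s\<in>S \<Longrightarrow> s\<noteq>0 \<Longrightarrow> s + dA S s \<in> S"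
  shows "s\<in>S \<Longrightarrow> s\<noteq>0 \<Longrightarrow> dA S s dvd n \<Longrightarrow> s + n \<in> S"
proof (induction n arbitrary: s rule: less_induct)
  case (less n)
  show ?case
  proof (cases "n = 0")
    case True thus ?thesis using less by simp
  next
    case False
    let ?d = "dA S s"
    have d0: "?d \<noteq> 0" using False less.prems(3) by auto
    have s': "s + ?d \<in> S" using sat less.prems by auto
    have "dA S (s + ?d) dvd ?d" by (rule dA_dvd_mono) auto
    moreover have "?d dvd n - ?d" using less.prems(3) by (simp add: dvd_diff_nat)
    ultimately have "dA S (s + ?d) dvd n - ?d" by (rule dvd_trans)
    moreover have "?d \<le> n" using less.prems(3) False by (simp add: dvd_imp_le)
    ultimately have "s + ?d + (n - ?d) \<in> S"
      using less.IH[of "n - ?d" "s + ?d"] s' d0 False by auto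
    thus ?thesis using \<open>?d \<le> n\<close> by simp
  qed
qed

lemma Sat_shift:
  assumes "S \<in> Sat F" "s\<in>S" "s\<noteq>0" "dA S s dvd n" shows "s + n \<in> S"
  using sat_shift[OF Sat_D(5)[OF assms(1)]] assms(2-4) by blast

lemma Inter_Sat:
  assumes "\<S> \<subseteq> Sat F" "\<S> \<noteq> {}"
  shows "\<Inter>\<S> \<in> Sat F"
proof (rule Sat_I)
  show "0 \<in> \<Inter>\<S>" using assms Sat_D(1) by blast
  show "\<And>x y. x\<in>\<Inter>\<S> \<Longrightarrow> y\<in>\<Inter>\<S> \<Longrightarrow> x+y\<in>\<Inter>\<S>" using assms Sat_D(2) by blast
  show "F \<notin> \<Inter>\<S>" using assms Sat_D(3) by blast
  show "\<And>x. x>F \<Longrightarrow> x\<in>\<Inter>\<S>" using assms Sat_D(4) by blast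
  fix s assume s: "s \<in> \<Inter>\<S>" "s \<noteq> 0"
  show "s + dA (\<Inter>\<S>) s \<in> \<Inter>\<S>"
  proof
    fix S assume S: "S \<in> \<S>"
    have "dA S s dvd dA (\<Inter>\<S>) s" by (rule dA_dvd_mono) (use S in auto)
    thus "s + dA (\<Inter>\<S>) s \<in> S" using Sat_shift[of S F s] S s assms(1) by blast
  qed
qed

lemma Delta_Sat: "F > 0 \<Longrightarrow> Delta (F+1) \<in> Sat F"
  by (rule Sat_I) (auto simp: Delta_def)

lemma Delta_sub: "S \<in> Sat F \<Longrightarrow> Delta (F+1) \<subseteq> S"
  using Sat_D(1,4) by (auto simp: Delta_def)

lemma cl_Sat: "S \<in> Sat F \<Longrightarrow> X \<subseteq> S \<Longrightarrow> Sat_closure F X \<in> Sat F"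
  unfolding Sat_closure_def by (rule Inter_Sat) auto

lemma cl_sup: "X \<subseteq> Sat_closure F X"
  unfolding Sat_closure_def by auto

lemma cl_least: "S \<in> Sat F \<Longrightarrow> X \<subseteq> S \<Longrightarrow> Sat_closure F X \<subseteq> S"
  unfolding Sat_closure_def by auto

lemma cl_mono: "S \<in> Sat F \<Longrightarrow> Y \<subseteq> S \<Longrightarrow> X \<subseteq> Y \<Longrightarrow> Sat_closure F X \<subseteq> Sat_closure F Y"
  by (meson cl_Sat cl_least cl_sup order_trans)


lemma L:
  assumes S: "S \<in> Sat F" and Y: "Y \<subseteq> S" and z: "z \<in> Sat_closure F Y" "z \<le> x"
  shows "z \<in> Sat_closure F {y\<in>Y. y \<le> x}"
proof -
  define A where "A = Sat_closure F {y\<in>Y. y \<le> x}"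
  have AS: "A \<in> Sat F" unfolding A_def by (rule cl_Sat[OF S]) (use Y in auto)
  have AsubS: "A \<subseteq> S" unfolding A_def by (rule cl_least[OF S]) (use Y in auto)
  define B where "B = {z\<in>A. z \<le> x} \<union> {z\<in>S. z > x}"
  have BS: "B \<subseteq> S" using AsubS by (auto simp: B_def)
  have "B \<in> Sat F"
  proof (rule Sat_I)
    show "0 \<in> B" using Sat_D(1)[OF AS] by (auto simp: B_def)
    show "F \<notin> B" using Sat_D(3)[OF AS] Sat_D(3)[OF S] by (auto simp: B_def)
    show "\<And>z. z>F \<Longrightarrow> z\<in>B" using Sat_D(4)[OF AS] Sat_D(4)[OF S] by (auto simp: B_def)
    show "\<And>a b. a\<in>B \<Longrightarrow> b\<in>B \<Longrightarrow> a+b\<in>B"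
    proof -
      fix a b assume ab: "a\<in>B" "b\<in>B"
      show "a+b \<in> B"
      proof (cases "a+b \<le> x")
        case True
        hence "a \<in> A" "b \<in> A" using ab by (auto simp: B_def)
        thus ?thesis using True Sat_D(2)[OF AS] by (auto simp: B_def)
      next
        case False
        hence "a+b \<in> S" using ab BS Sat_D(2)[OF S] by blast
        thus ?thesis using False by (auto simp: B_def)
      qed
    qed
    fix s assume s: "s \<in> B" "s \<noteq> 0"
    show "s + dA B s \<in> B"
    proof (cases "s + dA B s \<le> x")
      case True
      hence sx: "s \<le> x" by simp
      hence sA: "s \<in> A" using s by (auto simp: B_def)
      have "{t\<in>B. t \<le> s} = {t\<in>A. t \<le> s}" using sx by (auto simp: B_def)
      hence "dA B s = dA A s" by (simp add: dA_def)
      hence "s + dA B s \<in> A" using Sat_D(5)[OF AS sA s(2)] by simp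
      thus ?thesis using True by (auto simp: B_def)
    next
      case False
      have "dA S s dvd dA B s" by (rule dA_dvd_mono) (use BS in auto)
      hence "s + dA B s \<in> S" using Sat_shift[OF S, of s] s BS by blast
      thus ?thesis using False by (auto simp: B_def)
    qed
  qed
  moreover have "Y \<subseteq> B"
  proof
    fix y assume "y \<in> Y"
    thus "y \<in> B" using Y cl_sup[of "{y\<in>Y. y \<le> x}" F] unfolding B_def A_def by auto
  qed
  ultimately have "Sat_closure F Y \<subseteq> B" by (rule cl_least)
  thus ?thesis using z unfolding B_def A_def by auto
qed

definition Xs :: "nat \<Rightarrow> nat set \<Rightarrow> nat set" where
  "Xs F S = {x\<in>S. 0<x \<and> x\<le>F \<and> x \<notin> Sat_closure F {y\<in>S. 0<y \<and> y<x}}"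

lemma minimal_eq:
  assumes S: "S \<in> Sat F" and M: "minimal_Sat_system F X S"
  shows "X = Xs F S"
proof -
  have SX: "S = Sat_closure F X" and XD: "X \<inter> Delta (F+1) = {}"
    and min: "\<And>Y. Y \<subset> X \<Longrightarrow> S \<noteq> Sat_closure F Y"
    using M by (auto simp: minimal_Sat_system_def Sat_system_def Sat_set_def)
  have XS: "X \<subseteq> S" using SX cl_sup by blast
  have Xr: "\<And>x. x \<in> X \<Longrightarrow> 0 < x \<and> x \<le> F" using XD by (force simp: Delta_def)
  show ?thesis
  proof
    show "X \<subseteq> Xs F S"
    proof
      fix x assume x: "x \<in> X"
      let ?P = "{y\<in>S. 0<y \<and> y<x}"
      have "x \<notin> Sat_closure F ?P"
      proof
        assume xP: "x \<in> Sat_closure F ?P"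
        have XxS: "X - {x} \<subseteq> S" using XS by auto
        have "?P \<subseteq> Sat_closure F (X - {x})"
        proof
          fix y assume y: "y \<in> ?P"
          hence "y \<in> Sat_closure F {z\<in>X. z \<le> y}" using L[OF S XS, of y y] SX by auto
          moreover have "Sat_closure F {z\<in>X. z \<le> y} \<subseteq> Sat_closure F (X - {x})"
            by (rule cl_mono[OF S XxS]) (use y in auto)
          ultimately show "y \<in> Sat_closure F (X - {x})" by blast
        qed
        hence "Sat_closure F ?P \<subseteq> Sat_closure F (X - {x})"
          by (intro cl_least cl_Sat[OF S XxS])
        hence "X \<subseteq> Sat_closure F (X - {x})" using xP cl_sup[of "X - {x}" F] by blast
        hence "S \<subseteq> Sat_closure F (X - {x})" unfolding SX
          by (intro cl_least cl_Sat[OF S XxS])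
        moreover have "Sat_closure F (X - {x}) \<subseteq> S" by (rule cl_least[OF S XxS])
        ultimately have "S = Sat_closure F (X - {x})" by blast
        moreover have "X - {x} \<subset> X" using x by auto
        ultimately show False using min by blast
      qed
      thus "x \<in> Xs F S" using x XS Xr by (auto simp: Xs_def)
    qed
  next
    show "Xs F S \<subseteq> X"
    proof
      fix x assume x: "x \<in> Xs F S"
      let ?P = "{y\<in>S. 0<y \<and> y<x}"
      show "x \<in> X"
      proof (rule ccontr)
        assume nx: "x \<notin> X"
        have "x \<in> Sat_closure F {z\<in>X. z \<le> x}" using L[OF S XS, of x x] SX x by (auto simp: Xs_def)
        moreover have "Sat_closure F {z\<in>X. z \<le> x} \<subseteq> Sat_closure F ?P"
          by (rule cl_mono[OF S]) (use XS Xr nx in \<open>auto simp: le_less\<close>)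
        ultimately show False using x by (auto simp: Xs_def)
      qed
    qed
  qed
qed

lemma Xs_minimal:
  assumes S: "S \<in> Sat F"
  shows "minimal_Sat_system F (Xs F S) S"
proof -
  have XS: "Xs F S \<subseteq> S" by (auto simp: Xs_def)
  have XD: "Xs F S \<inter> Delta (F+1) = {}" by (auto simp: Xs_def Delta_def)
  have C: "Sat_closure F (Xs F S) \<in> Sat F" by (rule cl_Sat[OF S XS])
  have "\<forall>z. z \<in> S \<longrightarrow> 0 < z \<longrightarrow> z \<le> F \<longrightarrow> z \<in> Sat_closure F (Xs F S)"
  proof (intro allI)
    fix z show "z \<in> S \<longrightarrow> 0 < z \<longrightarrow> z \<le> F \<longrightarrow> z \<in> Sat_closure F (Xs F S)"
    proof (induction z rule: less_induct)
      case (less z)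
      show ?case
      proof (intro impI)
        assume z: "z \<in> S" "0 < z" "z \<le> F"
        show "z \<in> Sat_closure F (Xs F S)"
        proof (cases "z \<in> Xs F S")
          case True thus ?thesis using cl_sup by blast
        next
          case False
          hence zP: "z \<in> Sat_closure F {y\<in>S. 0<y \<and> y<z}" using z by (auto simp: Xs_def)
          have "{y\<in>S. 0<y \<and> y<z} \<subseteq> Sat_closure F (Xs F S)" using less.IH z by auto
          hence "Sat_closure F {y\<in>S. 0<y \<and> y<z} \<subseteq> Sat_closure F (Xs F S)"
            by (rule cl_least[OF C])
          thus ?thesis using zP by blast
        qed
      qed
    qed
  qed
  hence "S \<subseteq> Sat_closure F (Xs F S)"
    using Sat_D(1,4)[OF C] by (metis not_less not_gr0 subsetI)
  moreover have "Sat_closure F (Xs F S) \<subseteq> S" by (rule cl_least[OF S XS])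
  ultimately have SX: "S = Sat_closure F (Xs F S)" by blast
  have min: "\<forall>Y. Y \<subset> Xs F S \<longrightarrow> S \<noteq> Sat_closure F Y"
  proof (intro allI impI)
    fix Y assume Y: "Y \<subset> Xs F S"
    show "S \<noteq> Sat_closure F Y"
    proof
      assume SY: "S = Sat_closure F Y"
      obtain x where x: "x \<in> Xs F S" "x \<notin> Y" using Y by blast
      have YS: "Y \<subseteq> S" using Y XS by blast
      have "x \<in> Sat_closure F {z\<in>Y. z \<le> x}" using L[OF S YS, of x x] SY x by (auto simp: Xs_def)
      moreover have "Sat_closure F {z\<in>Y. z \<le> x} \<subseteq> Sat_closure F {y\<in>S. 0<y \<and> y<x}"
        by (rule cl_mono[OF S]) (use Y x in \<open>auto simp: Xs_def le_less\<close>)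
      ultimately show False using x by (auto simp: Xs_def)
    qed
  qed
  show ?thesis unfolding minimal_Sat_system_def Sat_system_def Sat_set_def
    using XD XS S SX min by blast
qed

lemma rank_Xs: "S \<in> Sat F \<Longrightarrow> (THE X. minimal_Sat_system F X S) = Xs F S"
  by (rule the_equality) (auto intro: Xs_minimal dest: minimal_eq)


lemma mult_in: "S \<in> Sat F \<Longrightarrow> m \<in> S \<Longrightarrow> k * m \<in> S"
  by (induction k) (auto intro: Sat_D(1,2))

lemma T_Sat:
  assumes "1 \<le> m" "\<not> m dvd F"
  shows "T m (F+1) \<in> Sat F"
proof (rule Sat_I)
  show "0 \<in> T m (F+1)" by (auto simp: T_def)
  show "F \<notin> T m (F+1)" using assms(2) by (auto simp: T_def)
  show "\<And>x. x>F \<Longrightarrow> x \<in> T m (F+1)" by (auto simp: T_def)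
  show "\<And>x y. x\<in>T m (F+1) \<Longrightarrow> y\<in>T m (F+1) \<Longrightarrow> x+y\<in>T m (F+1)"
    unfolding T_def by (auto simp: add_mult_distrib[symmetric])
  fix s assume s: "s \<in> T m (F+1)" "s \<noteq> 0"
  show "s + dA (T m (F+1)) s \<in> T m (F+1)"
  proof (cases "s \<ge> F+1")
    case True thus ?thesis by (auto simp: T_def)
  next
    case False
    then obtain k where k: "s = k*m" using s by (auto simp: T_def)
    with s have "k \<ge> 1" by (cases k) auto
    hence ms: "m \<le> s" using k by simp
    have "m \<in> {x \<in> T m (F+1). x \<le> s}" using ms by (auto simp: T_def intro: exI[of _ 1])
    hence d1: "dA (T m (F+1)) s dvd m" unfolding dA_def by (rule Gcd_dvd)
    have "m dvd dA (T m (F+1)) s" unfolding dA_def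
      by (rule Gcd_greatest) (use False in \<open>auto simp: T_def\<close>)
    hence "dA (T m (F+1)) s = m" using d1 by (simp add: dvd_antisym)
    thus ?thesis using k by (auto simp: T_def intro: exI[of _ "Suc k"])
  qed
qed

lemma cl_T:
  assumes "1 \<le> m" "\<not> m dvd F"
  shows "Sat_closure F {m} = T m (F+1)"
proof
  have TS: "T m (F+1) \<in> Sat F" by (rule T_Sat[OF assms])
  show "Sat_closure F {m} \<subseteq> T m (F+1)"
    by (rule cl_least[OF TS]) (auto simp: T_def intro: exI[of _ 1])
  have C: "Sat_closure F {m} \<in> Sat F" by (rule cl_Sat[OF TS]) (auto simp: T_def intro: exI[of _ 1])
  have m: "m \<in> Sat_closure F {m}" using cl_sup by blast
  show "T m (F+1) \<subseteq> Sat_closure F {m}"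
    unfolding T_def using mult_in[OF C m] Sat_D(4)[OF C] by auto
qed

theorem corollary48:
  fixes F :: nat and S :: "nat set"
  assumes "F > 0" and "numerical_semigroup S"
  shows "(S \<in> Sat F \<and> Sat_rank F S = 1) \<longleftrightarrow>
         (\<exists>m::nat. 2 \<le> m \<and> m < F \<and> \<not> m dvd F \<and> S = T m (F + 1))"
proof
  assume H: "S \<in> Sat F \<and> Sat_rank F S = 1"
  hence S: "S \<in> Sat F" by simp
  have "card (Xs F S) = 1" using H rank_Xs[OF S] by (simp add: Sat_rank_def)
  then obtain m where Xm: "Xs F S = {m}" by (rule card_1_singletonE)
  have M: "minimal_Sat_system F {m} S" using Xs_minimal[OF S] Xm by simp
  hence SX: "S = Sat_closure F {m}" by (simp add: minimal_Sat_system_def Sat_system_def)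
  have mS: "m \<in> S" "0 < m" "m \<le> F" using Xm by (auto simp: Xs_def)
  have nd: "\<not> m dvd F"
  proof
    assume "m dvd F" then obtain k where "F = k * m" by (auto simp: dvd_def mult.commute)
    thus False using mult_in[OF S mS(1), of k] Sat_D(3)[OF S] by simp
  qed
  have "m \<noteq> F" using mS Sat_D(3)[OF S] by auto
  moreover have "m \<noteq> 1" using nd by auto
  ultimately show "\<exists>m::nat. 2 \<le> m \<and> m < F \<and> \<not> m dvd F \<and> S = T m (F + 1)"
    using mS nd SX cl_T[of m F] by (intro exI[of _ m]) auto
next
  assume "\<exists>m::nat. 2 \<le> m \<and> m < F \<and> \<not> m dvd F \<and> S = T m (F + 1)"
  then obtain m where m: "2 \<le> m" "m < F" "\<not> m dvd F" and ST: "S = T m (F+1)" by blast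
  have S: "S \<in> Sat F" using T_Sat[of m F] m ST by simp
  have mS: "m \<in> S" using ST by (auto simp: T_def intro: exI[of _ 1])
  have mD: "m \<notin> Delta (F+1)" using m by (auto simp: Delta_def)
  have "minimal_Sat_system F {m} S"
    unfolding minimal_Sat_system_def Sat_system_def Sat_set_def
  proof (intro conjI allI impI)
    show "{m} \<inter> Delta (F+1) = {}" using mD by simp
    show "\<exists>S'\<in>Sat F. {m} \<subseteq> S'" using S mS by blast
    show "S = Sat_closure F {m}" using cl_T[of m F] m ST by simp
    fix Y assume "Y \<subset> {m}"
    hence Y: "Y = {}" by blast
    have "Sat_closure F Y \<subseteq> Delta (F+1)" unfolding Y
      by (rule cl_least[OF Delta_Sat[OF assms(1)]]) simp
    thus "S \<noteq> Sat_closure F Y" using mS mD by blast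
  qed
  hence "Xs F S = {m}" using minimal_eq[OF S] by simp
  thus "S \<in> Sat F \<and> Sat_rank F S = 1" using S rank_Xs[OF S] by (simp add: Sat_rank_def)
qed

end
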